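(* Let $d\in\mathbb{N}$. Then for any integer $k\ge19^{2d-1}+1$ and any support preserving map $F\colon S_{\ell_\infty^k}\to S_{\ell_1^k}$ (not assumed continuous), we have $\omega_F(\tfrac1d)\ge\tfrac12$. In particular, there is no sequence $(F_k\colon S_{\ell_\infty^k}\to S_{\ell_1^k})_{k=1}^\infty$ of equi-uniformly continuous support preserving maps.
   Context: $S_{\ell_p^k}$ is the unit sphere of $(\mathbb{R}^k,\|\cdot\|_p)$. $\mathrm{supp}(x)=\{i:x_i\neq0\}$; $F$ is support preserving if $\mathrm{supp}(F(x))=\mathrm{supp}(x)$ for all $x$. $\omega_F(t)=\sup\{\|F(x)-F(y)\|_1:\|x-y\|_\infty\le t\}$. A sequence $(F_k)$ is equi-uniformly continuous if for every $\varepsilon>0$ there is $\delta>0$ with $\omega_{F_k}(\delta)<\varepsilon$ for all $k$. *)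

theory Defs
  imports "HOL-Analysis.Analysis"
begin

text \<open>Vectors of R^k are represented as functions nat => real vanishing outside {0..<k}.\<close>

definition in_Rk :: "nat \<Rightarrow> (nat \<Rightarrow> real) \<Rightarrow> bool" where
  "in_Rk k x \<longleftrightarrow> (\<forall>i\<ge>k. x i = 0)"

definition linf_norm :: "nat \<Rightarrow> (nat \<Rightarrow> real) \<Rightarrow> real" where
  "linf_norm k x = Max (insert 0 ((\<lambda>i. \<bar>x i\<bar>) ` {..<k}))"

definition l1_norm :: "nat \<Rightarrow> (nat \<Rightarrow> real) \<Rightarrow> real" where
  "l1_norm k x = (\<Sum>i<k. \<bar>x i\<bar>)"

definition sphere_linf :: "nat \<Rightarrow> (nat \<Rightarrow> real) set" where
  "sphere_linf k = {x. in_Rk k x \<and> linf_norm k x = 1}"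

definition sphere_l1 :: "nat \<Rightarrow> (nat \<Rightarrow> real) set" where
  "sphere_l1 k = {x. in_Rk k x \<and> l1_norm k x = 1}"

definition supp :: "(nat \<Rightarrow> real) \<Rightarrow> nat set" where
  "supp x = {i. x i \<noteq> 0}"

definition support_preserving_map :: "nat \<Rightarrow> ((nat \<Rightarrow> real) \<Rightarrow> (nat \<Rightarrow> real)) \<Rightarrow> bool" where
  "support_preserving_map k F \<longleftrightarrow>
     (\<forall>x\<in>sphere_linf k. F x \<in> sphere_l1 k \<and> supp (F x) = supp x)"

definition modulus :: "nat \<Rightarrow> ((nat \<Rightarrow> real) \<Rightarrow> (nat \<Rightarrow> real)) \<Rightarrow> real \<Rightarrow> real" where
  "modulus k F t = Sup {l1_norm k (F x - F y) | x y.
      x \<in> sphere_linf k \<and> y \<in> sphere_linf k \<and> linf_norm k (x - y) \<le> t}"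

end

theory Submission
  imports Defs
begin

lemma linf_le:
  assumes "\<And>i. i < k \<Longrightarrow> \<bar>x i\<bar> \<le> c" "0 \<le> c"
  shows "linf_norm k x \<le> c"
  unfolding linf_norm_def using assms by (auto intro!: Max.boundedI)

lemma linf_ge:
  assumes "i < k" shows "\<bar>x i\<bar> \<le> linf_norm k x"
  unfolding linf_norm_def using assms by (intro Max_ge) auto

lemma linf_eq1:
  assumes "\<And>i. i < k \<Longrightarrow> \<bar>x i\<bar> \<le> 1" "i0 < k" "\<bar>x i0\<bar> = 1"
  shows "linf_norm k x = 1"
  using linf_le[of k x 1] linf_ge[of i0 k x] assms by force

lemma sp_l1: "support_preserving_map k F \<Longrightarrow> x \<in> sphere_linf k \<Longrightarrow> (\<Sum>i<k. \<bar>F x i\<bar>) = 1"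
  by (auto simp: support_preserving_map_def sphere_l1_def l1_norm_def)

lemma sp_zero: "support_preserving_map k F \<Longrightarrow> x \<in> sphere_linf k \<Longrightarrow> x i = 0 \<Longrightarrow> F x i = 0"
  unfolding support_preserving_map_def supp_def by (auto simp: set_eq_iff)

lemma mod_upper:
  assumes sp: "support_preserving_map k F" and x: "x \<in> sphere_linf k" and y: "y \<in> sphere_linf k"
    and t: "linf_norm k (x - y) \<le> t"
  shows "l1_norm k (F x - F y) \<le> modulus k F t"
  unfolding modulus_def
proof (rule cSup_upper)
  show "l1_norm k (F x - F y) \<in> {l1_norm k (F x - F y) |x y. x \<in> sphere_linf k \<and> y \<in> sphere_linf k \<and> linf_norm k (x - y) \<le> t}"
    using x y t by blast
  show "bdd_above {l1_norm k (F x - F y) |x y. x \<in> sphere_linf k \<and> y \<in> sphere_linf k \<and> linf_norm k (x - y) \<le> t}"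
    unfolding bdd_above_def
  proof (intro exI[of _ 2] ballI)
    fix z assume "z \<in> {l1_norm k (F x - F y) |x y. x \<in> sphere_linf k \<and> y \<in> sphere_linf k \<and> linf_norm k (x - y) \<le> t}"
    then obtain a b where ab: "a \<in> sphere_linf k" "b \<in> sphere_linf k" "z = l1_norm k (F a - F b)" by blast
    have "z \<le> (\<Sum>i<k. \<bar>F a i\<bar> + \<bar>F b i\<bar>)"
      unfolding ab l1_norm_def by (intro sum_mono) (simp add: abs_triangle_ineq4)
    also have "\<dots> = 2" using sp_l1[OF sp ab(1)] sp_l1[OF sp ab(2)] by (simp add: sum.distrib)
    finally show "z \<le> 2" .
  qed
qed

lemma linf_perm:
  assumes "\<sigma> permutes {..<k}"
  shows "linf_norm k (x \<circ> \<sigma>) = linf_norm k x"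
proof -
  have "(\<lambda>i. \<bar>(x \<circ> \<sigma>) i\<bar>) ` {..<k} = (\<lambda>i. \<bar>x i\<bar>) ` (\<sigma> ` {..<k})"
    by (simp add: image_image)
  then show ?thesis by (simp add: linf_norm_def permutes_image[OF assms])
qed

lemma perm_sphere:
  assumes "\<sigma> permutes {..<k}" "x \<in> sphere_linf k"
  shows "x \<circ> \<sigma> \<in> sphere_linf k"
  using assms linf_perm[OF assms(1), of x]
  by (auto simp: sphere_linf_def in_Rk_def permutes_not_in)

lemma symmetrize:
  assumes sp: "support_preserving_map k F"
    and nb: "\<And>x y. x \<in> sphere_linf k \<Longrightarrow> y \<in> sphere_linf k \<Longrightarrow> linf_norm k (x - y) \<le> t \<Longrightarrow> l1_norm k (F x - F y) \<le> M"
  shows "\<exists>\<nu>. (\<forall>x\<in>sphere_linf k. \<forall>i. 0 \<le> \<nu> x i) \<and>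
             (\<forall>x\<in>sphere_linf k. (\<Sum>i<k. \<nu> x i) = 1) \<and>
             (\<forall>x\<in>sphere_linf k. \<forall>i. x i = 0 \<longrightarrow> \<nu> x i = 0) \<and>
             (\<forall>x\<in>sphere_linf k. \<forall>y\<in>sphere_linf k. linf_norm k (x - y) \<le> t \<longrightarrow> (\<Sum>i<k. \<bar>\<nu> x i - \<nu> y i\<bar>) \<le> M) \<and>
             (\<forall>x\<in>sphere_linf k. \<forall>\<sigma>. \<sigma> permutes {..<k} \<longrightarrow> (\<forall>i. \<nu> (x \<circ> \<sigma>) i = \<nu> x (\<sigma> i)))"
proof -
  define G where "G = {\<sigma>. \<sigma> permutes {..<k}}"
  define c where "c = real (card G)"
  have finG: "finite G" unfolding G_def by (rule finite_permutations) simp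
  have cpos: "c > 0" unfolding c_def G_def
    using card_permutations[of "{..<k}" k] by simp
  define \<nu> where "\<nu> x i = (\<Sum>\<sigma>\<in>G. \<bar>F (x \<circ> \<sigma>) (inv \<sigma> i)\<bar>) / c" for x i
  have reidx: "(\<Sum>i<k. g (inv \<sigma> i)) = (\<Sum>i<k. g i)" if "\<sigma> \<in> G" for g :: "nat \<Rightarrow> real" and \<sigma>
  proof -
    have "\<sigma> permutes {..<k}" using that by (simp add: G_def)
    then have "bij_betw (inv \<sigma>) {..<k} {..<k}" by (intro permutes_imp_bij permutes_inv)
    then show ?thesis by (rule sum.reindex_bij_betw)
  qed
  have P1: "\<forall>x\<in>sphere_linf k. \<forall>i. 0 \<le> \<nu> x i"
    using cpos by (auto simp: \<nu>_def intro!: divide_nonneg_pos sum_nonneg)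
  have P2: "\<forall>x\<in>sphere_linf k. (\<Sum>i<k. \<nu> x i) = 1"
  proof
    fix x assume x: "x \<in> sphere_linf k"
    have "(\<Sum>i<k. \<nu> x i) = (\<Sum>\<sigma>\<in>G. (\<Sum>i<k. \<bar>F (x \<circ> \<sigma>) (inv \<sigma> i)\<bar>)) / c"
      unfolding \<nu>_def by (simp add: sum_divide_distrib[symmetric] sum.swap[of _ G])
    also have "\<dots> = (\<Sum>\<sigma>\<in>G. 1) / c"
    proof (intro arg_cong[where f="\<lambda>a. a / c"] sum.cong refl)
      fix \<sigma> assume s: "\<sigma> \<in> G"
      then have "x \<circ> \<sigma> \<in> sphere_linf k" using x by (intro perm_sphere) (auto simp: G_def)
      then show "(\<Sum>i<k. \<bar>F (x \<circ> \<sigma>) (inv \<sigma> i)\<bar>) = 1"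
        using reidx[OF s, of "\<lambda>i. \<bar>F (x \<circ> \<sigma>) i\<bar>"] sp_l1[OF sp] by simp
    qed
    also have "\<dots> = 1" using cpos by (simp add: c_def)
    finally show "(\<Sum>i<k. \<nu> x i) = 1" .
  qed
  have P3: "\<forall>x\<in>sphere_linf k. \<forall>i. x i = 0 \<longrightarrow> \<nu> x i = 0"
  proof (intro ballI allI impI)
    fix x i assume x: "x \<in> sphere_linf k" and xi: "x i = 0"
    have "F (x \<circ> \<sigma>) (inv \<sigma> i) = 0" if s: "\<sigma> \<in> G" for \<sigma>
    proof -
      have sp\<sigma>: "\<sigma> permutes {..<k}" using s by (simp add: G_def)
      have "x \<circ> \<sigma> \<in> sphere_linf k" using x sp\<sigma> by (rule perm_sphere[rotated])
      moreover have "(x \<circ> \<sigma>) (inv \<sigma> i) = 0" using xi by (simp add: permutes_inverses[OF sp\<sigma>])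
      ultimately show ?thesis by (rule sp_zero[OF sp])
    qed
    then show "\<nu> x i = 0" by (simp add: \<nu>_def)
  qed
  have P4: "\<forall>x\<in>sphere_linf k. \<forall>y\<in>sphere_linf k. linf_norm k (x - y) \<le> t \<longrightarrow> (\<Sum>i<k. \<bar>\<nu> x i - \<nu> y i\<bar>) \<le> M"
  proof (intro ballI impI)
    fix x y assume x: "x \<in> sphere_linf k" and y: "y \<in> sphere_linf k" and xy: "linf_norm k (x - y) \<le> t"
    have "(\<Sum>i<k. \<bar>\<nu> x i - \<nu> y i\<bar>) = (\<Sum>i<k. \<bar>\<Sum>\<sigma>\<in>G. \<bar>F (x \<circ> \<sigma>) (inv \<sigma> i)\<bar> - \<bar>F (y \<circ> \<sigma>) (inv \<sigma> i)\<bar>\<bar>) / c"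
      unfolding \<nu>_def using cpos
      by (simp add: sum_divide_distrib[symmetric] diff_divide_distrib[symmetric] sum_subtractf)
    also have "\<dots> \<le> (\<Sum>i<k. \<Sum>\<sigma>\<in>G. \<bar>F (x \<circ> \<sigma>) (inv \<sigma> i) - F (y \<circ> \<sigma>) (inv \<sigma> i)\<bar>) / c"
      using cpos
      by (intro divide_right_mono sum_mono order.trans[OF sum_abs] abs_triangle_ineq3) auto
    also have "\<dots> = (\<Sum>\<sigma>\<in>G. \<Sum>i<k. \<bar>F (x \<circ> \<sigma>) (inv \<sigma> i) - F (y \<circ> \<sigma>) (inv \<sigma> i)\<bar>) / c"
      by (simp add: sum.swap[of _ G])
    also have "\<dots> \<le> (\<Sum>\<sigma>\<in>G. M) / c"
    proof (intro divide_right_mono sum_mono)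
      fix \<sigma> assume s: "\<sigma> \<in> G"
      have sp\<sigma>: "\<sigma> permutes {..<k}" using s by (simp add: G_def)
      have xs: "x \<circ> \<sigma> \<in> sphere_linf k" using x sp\<sigma> by (rule perm_sphere[rotated])
      have ys: "y \<circ> \<sigma> \<in> sphere_linf k" using y sp\<sigma> by (rule perm_sphere[rotated])
      have "(x \<circ> \<sigma>) - (y \<circ> \<sigma>) = (x - y) \<circ> \<sigma>" by (simp add: fun_eq_iff)
      then have "linf_norm k ((x \<circ> \<sigma>) - (y \<circ> \<sigma>)) \<le> t" using xy linf_perm[OF sp\<sigma>] by simp
      then have "l1_norm k (F (x \<circ> \<sigma>) - F (y \<circ> \<sigma>)) \<le> M" by (rule nb[OF xs ys])
      then show "(\<Sum>i<k. \<bar>F (x \<circ> \<sigma>) (inv \<sigma> i) - F (y \<circ> \<sigma>) (inv \<sigma> i)\<bar>) \<le> M"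
        using reidx[OF s, of "\<lambda>i. \<bar>F (x \<circ> \<sigma>) i - F (y \<circ> \<sigma>) i\<bar>"] by (simp add: l1_norm_def)
    qed (use cpos in auto)
    also have "\<dots> = M" using cpos by (simp add: c_def)
    finally show "(\<Sum>i<k. \<bar>\<nu> x i - \<nu> y i\<bar>) \<le> M" .
  qed
  have P5: "\<forall>x\<in>sphere_linf k. \<forall>\<sigma>. \<sigma> permutes {..<k} \<longrightarrow> (\<forall>i. \<nu> (x \<circ> \<sigma>) i = \<nu> x (\<sigma> i))"
  proof (intro ballI allI impI)
    fix x \<pi> i assume \<pi>: "\<pi> permutes {..<k}"
    have "(\<Sum>\<sigma>\<in>G. \<bar>F (x \<circ> \<sigma>) (inv \<sigma> (\<pi> i))\<bar>) = (\<Sum>\<sigma>\<in>G. \<bar>F (x \<circ> (\<pi> \<circ> \<sigma>)) (inv (\<pi> \<circ> \<sigma>) (\<pi> i))\<bar>)"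
      unfolding G_def by (rule setum_permutations_compose_left[OF \<pi>])
    also have "\<dots> = (\<Sum>\<sigma>\<in>G. \<bar>F ((x \<circ> \<pi>) \<circ> \<sigma>) (inv \<sigma> i)\<bar>)"
    proof (intro sum.cong refl)
      fix \<sigma> assume s: "\<sigma> \<in> G"
      have sp\<sigma>: "\<sigma> permutes {..<k}" using s by (simp add: G_def)
      have "inv (\<pi> \<circ> \<sigma>) (\<pi> i) = inv \<sigma> i"
        using o_inv_distrib[OF permutes_bij[OF \<pi>] permutes_bij[OF sp\<sigma>]]
        by (simp add: permutes_inverses[OF \<pi>])
      then show "\<bar>F (x \<circ> (\<pi> \<circ> \<sigma>)) (inv (\<pi> \<circ> \<sigma>) (\<pi> i))\<bar> = \<bar>F ((x \<circ> \<pi>) \<circ> \<sigma>) (inv \<sigma> i)\<bar>"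
        by (simp add: o_assoc)
    qed
    finally show "\<nu> (x \<circ> \<pi>) i = \<nu> x (\<pi> i)" by (simp add: \<nu>_def)
  qed
  show ?thesis using P1 P2 P3 P4 P5 by blast
qed


lemma half_bound:
  fixes \<nu> :: "(nat \<Rightarrow> real) \<Rightarrow> nat \<Rightarrow> real"
  assumes sum1: "\<forall>x\<in>sphere_linf k. (\<Sum>i<k. \<nu> x i) = 1"
    and nbxy: "(\<Sum>i<k. \<bar>\<nu> x i - \<nu> y i\<bar>) \<le> M"
    and x: "x \<in> sphere_linf k" and y: "y \<in> sphere_linf k" and S: "S \<subseteq> {..<k}"
  shows "(\<Sum>i\<in>S. \<nu> y i - \<nu> x i) \<le> M / 2"
proof -
  define D where "D i = \<nu> y i - \<nu> x i" for i
  have tot: "(\<Sum>i<k. D i) = 0" using sum1 x y by (simp add: D_def sum_subtractf)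
  have split: "(\<Sum>i<k. D i) = (\<Sum>i\<in>{..<k} - S. D i) + (\<Sum>i\<in>S. D i)"
    using S by (simp add: sum.subset_diff[of S "{..<k}"])
  have splitabs: "(\<Sum>i<k. \<bar>D i\<bar>) = (\<Sum>i\<in>{..<k} - S. \<bar>D i\<bar>) + (\<Sum>i\<in>S. \<bar>D i\<bar>)"
    using S by (simp add: sum.subset_diff[of S "{..<k}"])
  have a1: "(\<Sum>i\<in>S. D i) \<le> (\<Sum>i\<in>S. \<bar>D i\<bar>)" by (rule sum_mono) auto
  have a2: "(\<Sum>i\<in>{..<k} - S. - D i) \<le> (\<Sum>i\<in>{..<k} - S. \<bar>D i\<bar>)" by (rule sum_mono) auto
  have a4: "(\<Sum>i<k. \<bar>D i\<bar>) \<le> M" using nbxy by (simp add: D_def abs_minus_commute)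
  have "(\<Sum>i\<in>S. D i) \<le> M / 2"
    using tot split splitabs a1 a2 a4 by (simp add: sum_negf)
  then show ?thesis by (simp add: D_def)
qed

lemma main_comb:
  fixes \<nu> :: "(nat \<Rightarrow> real) \<Rightarrow> nat \<Rightarrow> real" and d k :: nat and M :: real
  assumes d1: "1 \<le> d" and kd: "Suc d * 4 ^ d \<le> k"
    and nonneg: "\<forall>x\<in>sphere_linf k. \<forall>i. 0 \<le> \<nu> x i"
    and sum1: "\<forall>x\<in>sphere_linf k. (\<Sum>i<k. \<nu> x i) = 1"
    and zero: "\<forall>x\<in>sphere_linf k. \<forall>i. x i = 0 \<longrightarrow> \<nu> x i = 0"
    and nb: "\<forall>x\<in>sphere_linf k. \<forall>y\<in>sphere_linf k. linf_norm k (x - y) \<le> 1 / real d \<longrightarrow> (\<Sum>i<k. \<bar>\<nu> x i - \<nu> y i\<bar>) \<le> M"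
    and eqv: "\<forall>x\<in>sphere_linf k. \<forall>\<sigma>. \<sigma> permutes {..<k} \<longrightarrow> (\<forall>i. \<nu> (x \<circ> \<sigma>) i = \<nu> x (\<sigma> i))"
  shows "1 / 2 \<le> M"
proof -
  define n where "n = Suc d"
  define val :: "nat \<Rightarrow> real" where "val j = real (max (d - j) 1) / real d" for j
  define x0 :: "nat \<Rightarrow> real" where "x0 i = (if i div n < 4 ^ (i mod n) then val (i mod n) else 0)" for i
  have dpos: "real d > 0" using d1 by simp
  have npos: "0 < n" by (simp add: n_def)
  have dm: "(j + m * n) mod n = j" "(j + m * n) div n = m" if "j < n" for j m
    using that npos by simp_all
  have pow_mono: "(4::nat) ^ a \<le> 4 ^ b" if "a \<le> b" for a b using that by (simp add: power_increasing)
  have enc_lt: "j + m * n < k" if "j \<le> d" "m < 4 ^ d" for j m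
  proof -
    have "j + m * n < n + m * n" using that by (simp add: n_def)
    also have "\<dots> = Suc m * n" by simp
    also have "\<dots> \<le> 4 ^ d * n" using that by (intro mult_right_mono) auto
    also have "\<dots> \<le> k" using kd by (simp add: n_def mult.commute)
    finally show ?thesis .
  qed
  have big: "4 ^ d \<le> i div n" if "k \<le> i" for i
  proof -
    have "4 ^ d * n \<le> i" using kd that by (simp add: n_def mult.commute)
    then have "(4 ^ d * n) div n \<le> i div n" by (rule div_le_mono)
    then show ?thesis using npos by simp
  qed
  have modle: "i mod n \<le> d" for i
    using mod_less_divisor[OF npos, of i] by (simp add: n_def)
  have decomp: "i = i mod n + (i div n) * n" for i by simp
  have val_le1: "val j \<le> 1" for j
    using d1 dpos by (simp add: val_def)
  have val_pos: "0 < val j" for j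
    using dpos by (simp add: val_def)
  have val_0: "val 0 = 1" using d1 dpos by (simp add: val_def max_def)
  have val_d: "val d = 1 / real d" by (simp add: val_def)
  have val_step: "\<bar>val j - val (Suc j)\<bar> \<le> 1 / real d" for j
  proof -
    have "max (d - j) 1 \<le> max (d - Suc j) 1 + 1 \<and> max (d - Suc j) 1 \<le> max (d - j) (1::nat)"
      by (simp add: max_def) arith
    then have "\<bar>real (max (d - j) 1) - real (max (d - Suc j) 1)\<bar> \<le> 1" by linarith
    then show ?thesis using dpos
      by (simp add: val_def diff_divide_distrib[symmetric] divide_right_mono)
  qed
  have x0_enc: "x0 (j + m * n) = (if m < 4 ^ j then val j else 0)" if "j < n" for j m
    using dm[OF that] by (simp add: x0_def)
  have x0_zero_big: "x0 i = 0" if "k \<le> i" for i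
  proof -
    have "\<not> i div n < 4 ^ (i mod n)" using big[OF that] pow_mono[OF modle[of i]] by linarith
    then show ?thesis by (simp add: x0_def)
  qed
  have k0: "0 < k" using enc_lt[of 0 0] by simp
  have x0_sph: "x0 \<in> sphere_linf k"
    unfolding sphere_linf_def in_Rk_def
  proof (intro CollectI conjI allI impI)
    show "x0 i = 0" if "k \<le> i" for i using x0_zero_big that .
    show "linf_norm k x0 = 1"
    proof (rule linf_eq1[of k x0 0])
      show "\<bar>x0 i\<bar> \<le> 1" for i using val_le1 val_pos by (simp add: x0_def less_imp_le)
      show "0 < k" by (rule k0)
      show "\<bar>x0 0\<bar> = 1" using val_0 npos by (simp add: x0_def)
    qed
  qed
  define p where "p j = \<nu> x0 j" for j
  have pnn: "0 \<le> p j" for j using nonneg x0_sph by (simp add: p_def)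
  have pc: "\<nu> x0 (j + m * n) = p j" if "j \<le> d" "m < 4 ^ j" for j m
  proof -
    have jn: "j < n" using that by (simp add: n_def)
    have jk: "j < k" using enc_lt[of j 0] that by simp
    have "m < 4 ^ d" using that(2) pow_mono[OF that(1)] by linarith
    then have ik: "j + m * n < k" using enc_lt[of j m] that by simp
    let ?t = "Transposition.transpose j (j + m * n)"
    have tp: "?t permutes {..<k}" using jk ik by (intro permutes_swap_id) auto
    have xj: "x0 j = x0 (j + m * n)"
      using x0_enc[OF jn, of 0] x0_enc[OF jn, of m] that by simp
    have "x0 \<circ> ?t = x0"
    proof
      fix i show "(x0 \<circ> ?t) i = x0 i"
        using xj by (cases "i = j"; cases "i = j + m * n") auto
    qed
    then have "\<nu> x0 j = \<nu> x0 (?t j)" using eqv x0_sph tp by metis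
    then show ?thesis by (simp add: p_def)
  qed
  define Sig where "Sig = (SIGMA j:{..d}. {..<(4::nat) ^ j})"
  define C where "C = (\<lambda>(j, m). j + m * n) ` Sig"
  have injC: "inj_on (\<lambda>(j, m). j + m * n) Sig"
  proof (rule inj_onI, clarify)
    fix j m j' m' assume a: "(j, m) \<in> Sig" "(j', m') \<in> Sig" "j + m * n = j' + m' * n"
    have "j < n" "j' < n" using a by (auto simp: Sig_def n_def)
    then show "j = j' \<and> m = m'" using a(3) dm by metis
  qed
  have Ck: "C \<subseteq> {..<k}"
  proof
    fix i assume "i \<in> C"
    then obtain j m where jm: "j \<le> d" "m < 4 ^ j" "i = j + m * n" by (auto simp: C_def Sig_def)
    then have "m < 4 ^ d" using pow_mono[OF jm(1)] jm(2) by linarith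
    then show "i \<in> {..<k}" using enc_lt[of j m] jm by simp
  qed
  have off: "\<nu> x0 i = 0" if "i \<in> {..<k} - C" for i
  proof -
    have "x0 i = 0"
    proof (rule ccontr)
      assume "x0 i \<noteq> 0"
      then have "i div n < 4 ^ (i mod n)" by (simp add: x0_def split: if_splits)
      then have "(i mod n, i div n) \<in> Sig" using modle by (simp add: Sig_def)
      then have "i \<in> C" unfolding C_def by (rule rev_image_eqI) simp
      then show False using that by simp
    qed
    then show ?thesis using zero x0_sph by simp
  qed
  have "1 = (\<Sum>i<k. \<nu> x0 i)" using sum1 x0_sph by simp
  also have "\<dots> = (\<Sum>i\<in>C. \<nu> x0 i)"
    by (rule sum.mono_neutral_right) (use Ck off in auto)
  also have "\<dots> = (\<Sum>(j, m)\<in>Sig. \<nu> x0 (j + m * n))"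
    unfolding C_def by (subst sum.reindex[OF injC]) (simp add: case_prod_unfold)
  also have "\<dots> = (\<Sum>j\<le>d. \<Sum>m<4 ^ j. \<nu> x0 (j + m * n))"
    unfolding Sig_def by (subst sum.Sigma) auto
  also have "\<dots> = (\<Sum>j\<le>d. 4 ^ j * p j)"
    by (intro sum.cong refl) (simp add: pc)
  finally have total: "(\<Sum>j\<le>d. 4 ^ j * p j) = 1" by simp
  have swapq: "(\<Sum>j\<in>{j. j < d \<and> j mod 2 = q}. 4 ^ j * (p j - p (Suc j))) \<le> M / 2" for q :: nat
  proof -
    define \<tau> where "\<tau> j m = (if j < d \<and> j mod 2 = q \<and> m < 4 ^ j then Suc j
        else if 0 < j \<and> (j - 1) mod 2 = q \<and> m < (4::nat) ^ (j - 1) then j - 1 else j)" for j m :: nat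
    define \<sigma> where "\<sigma> i = \<tau> (i mod n) (i div n) + (i div n) * n" for i
    have \<tau>lt: "\<tau> j m < n" if "j < n" for j m using that by (auto simp: \<tau>_def n_def)
    have par: "Suc j mod 2 \<noteq> j mod 2" for j :: nat by presburger
    have \<tau>\<tau>: "\<tau> (\<tau> j m) m = j" if "j < n" for j m
    proof (cases "j < d \<and> j mod 2 = q \<and> m < 4 ^ j")
      case True
      then have "\<tau> j m = Suc j" by (simp add: \<tau>_def)
      moreover have "\<not> (Suc j < d \<and> Suc j mod 2 = q)" using True par[of j] by auto
      ultimately show ?thesis using True by (simp add: \<tau>_def)
    next
      case f1: False
      show ?thesis
      proof (cases "0 < j \<and> (j - 1) mod 2 = q \<and> m < (4::nat) ^ (j - 1)")
        case True
        then have "j mod 2 \<noteq> q" using par[of "j - 1"] by (cases j) auto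
        then have "\<tau> j m = j - 1" using True by (simp add: \<tau>_def)
        moreover have "j - 1 < d" using that True by (simp add: n_def) linarith
        ultimately show ?thesis using True by (simp add: \<tau>_def)
      next
        case False
        then have "\<tau> j m = j" using f1 unfolding \<tau>_def by auto
        then show ?thesis using f1 False by simp
      qed
    qed
    have \<sigma>\<sigma>: "\<sigma> (\<sigma> i) = i" for i
    proof -
      have jn: "i mod n < n" using npos by simp
      have "\<sigma> (\<sigma> i) = \<tau> (\<tau> (i mod n) (i div n)) (i div n) + (i div n) * n"
        unfolding \<sigma>_def[of i] using dm[OF \<tau>lt[OF jn]] by (simp add: \<sigma>_def)
      also have "\<dots> = i" using \<tau>\<tau>[OF jn] by simp
      finally show ?thesis .
    qed
    have \<sigma>fix: "\<sigma> i = i" if "k \<le> i" for i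
    proof -
      have b: "4 ^ d \<le> i div n" using big[OF that] .
      have "\<tau> (i mod n) (i div n) = i mod n"
      proof -
        have "\<not> i div n < 4 ^ (i mod n)" using b pow_mono[OF modle[of i]] by linarith
        moreover have "\<not> i div n < 4 ^ (i mod n - 1)" using b pow_mono[of "i mod n - 1" d] modle[of i] by linarith
        ultimately show ?thesis by (simp add: \<tau>_def)
      qed
      then show ?thesis by (simp add: \<sigma>_def)
    qed
    have \<sigma>perm: "\<sigma> permutes {..<k}"
      unfolding permutes_def
    proof (intro conjI allI impI)
      show "\<sigma> i = i" if "i \<notin> {..<k}" for i using that \<sigma>fix by simp
      show "\<exists>!x. \<sigma> x = y" for y
        by (rule ex1I[of _ "\<sigma> y"]) (use \<sigma>\<sigma> in metis)+
    qed
    define y where "y = x0 \<circ> \<sigma>"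
    have y_sph: "y \<in> sphere_linf k" unfolding y_def using \<sigma>perm x0_sph by (rule perm_sphere)
    have close: "linf_norm k (x0 - y) \<le> 1 / real d"
    proof (rule linf_le)
      show "0 \<le> 1 / real d" by simp
      fix i :: nat
      define j where "j = i mod n"
      define m where "m = i div n"
      have jn: "j < n" using npos by (simp add: j_def)
      have xi: "x0 i = (if m < 4 ^ j then val j else 0)" by (simp add: x0_def j_def m_def)
      have yi: "y i = (if m < 4 ^ (\<tau> j m) then val (\<tau> j m) else 0)"
        unfolding y_def o_def \<sigma>_def j_def[symmetric] m_def[symmetric] using x0_enc[OF \<tau>lt[OF jn]] by simp
      have vs: "\<bar>val (j - 1) - val j\<bar> \<le> 1 / real d" if "0 < j"
        using val_step[of "j - 1"] that by simp
      show "\<bar>(x0 - y) i\<bar> \<le> 1 / real d"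
      proof (cases "j < d \<and> j mod 2 = q \<and> m < 4 ^ j")
        case True
        then have "m < 4 ^ Suc j" by simp
        then show ?thesis using True val_step[of j] by (simp add: xi yi \<tau>_def)
      next
        case f1: False
        show ?thesis
        proof (cases "0 < j \<and> (j - 1) mod 2 = q \<and> m < 4 ^ (j - 1)")
          case True
          then have "m < 4 ^ j" using pow_mono[of "j - 1" j] by linarith
          then show ?thesis using True f1 vs val_step[of j] by (simp add: xi yi \<tau>_def abs_minus_commute)
        next
          case False
          then have "\<tau> j m = j" using f1 unfolding \<tau>_def by auto
          then show ?thesis by (simp add: xi yi)
        qed
      qed
    qed
    define U where "U = (SIGMA j:{j. j < d \<and> j mod 2 = q}. {..<(4::nat) ^ j})"
    define S where "S = (\<lambda>(j, m). Suc j + m * n) ` U"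
    have finJ: "finite {j. j < d \<and> j mod 2 = q}" by (rule finite_subset[of _ "{..<d}"]) auto
    have injU: "inj_on (\<lambda>(j, m). Suc j + m * n) U"
    proof (rule inj_onI, clarify)
      fix j m j' m' assume a: "(j, m) \<in> U" "(j', m') \<in> U" "Suc j + m * n = Suc j' + m' * n"
      have "Suc j < n" "Suc j' < n" using a by (auto simp: U_def n_def)
      then show "j = j' \<and> m = m'" using a(3) dm by (metis Suc_inject)
    qed
    have SK: "S \<subseteq> {..<k}"
    proof
      fix i assume "i \<in> S"
      then obtain j m where jm: "j < d" "m < 4 ^ j" "i = Suc j + m * n" by (auto simp: S_def U_def)
      then have "m < 4 ^ d" using pow_mono[of j d] by linarith
      then show "i \<in> {..<k}" using enc_lt[of "Suc j" m] jm by simp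
    qed
    have "(\<Sum>i\<in>S. \<nu> y i - \<nu> x0 i) \<le> M / 2"
      using half_bound[OF sum1 _ x0_sph y_sph SK] nb x0_sph y_sph close by blast
    moreover have "(\<Sum>i\<in>S. \<nu> y i - \<nu> x0 i) = (\<Sum>(j, m)\<in>U. \<nu> y (Suc j + m * n) - \<nu> x0 (Suc j + m * n))"
      unfolding S_def by (subst sum.reindex[OF injU]) (simp add: case_prod_unfold)
    moreover have "\<dots> = (\<Sum>(j, m)\<in>U. p j - p (Suc j))"
    proof (intro sum.cong refl, clarify)
      fix j m assume "(j, m) \<in> U"
      then have jm: "j < d" "j mod 2 = q" "m < 4 ^ j" by (auto simp: U_def)
      have sjn: "Suc j < n" using jm by (simp add: n_def)
      have "\<tau> (Suc j) m = j" using jm par[of j] by (auto simp: \<tau>_def)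
      then have "\<sigma> (Suc j + m * n) = j + m * n" using dm[OF sjn] by (simp add: \<sigma>_def)
      then have "\<nu> y (Suc j + m * n) = \<nu> x0 (j + m * n)"
        using eqv x0_sph \<sigma>perm by (simp add: y_def)
      also have "\<dots> = p j" using jm by (intro pc) auto
      finally have e1: "\<nu> y (Suc j + m * n) = p j" .
      have "m < 4 ^ Suc j" using jm by simp
      then have e2: "\<nu> x0 (Suc j + m * n) = p (Suc j)" using jm by (intro pc) auto
      show "\<nu> y (Suc j + m * n) - \<nu> x0 (Suc j + m * n) = p j - p (Suc j)" using e1 e2 by simp
    qed
    moreover have "\<dots> = (\<Sum>j\<in>{j. j < d \<and> j mod 2 = q}. 4 ^ j * (p j - p (Suc j)))"
      unfolding U_def using finJ by (subst sum.Sigma[symmetric]) auto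
    ultimately show ?thesis by simp
  qed
  have sw: "(\<Sum>j<d. 4 ^ j * (p j - p (Suc j))) \<le> M"
  proof -
    have un: "{..<d} = {j. j < d \<and> j mod 2 = 0} \<union> {j. j < d \<and> j mod 2 = 1}" by auto
    have "(\<Sum>j<d. 4 ^ j * (p j - p (Suc j))) =
          (\<Sum>j\<in>{j. j < d \<and> j mod 2 = 0}. 4 ^ j * (p j - p (Suc j))) +
          (\<Sum>j\<in>{j. j < d \<and> j mod 2 = 1}. 4 ^ j * (p j - p (Suc j)))"
      unfolding un by (rule sum.union_disjoint) auto
    then show ?thesis using swapq[of 0] swapq[of 1] by simp
  qed
  have bot: "4 ^ d * p d \<le> M / 2"
  proof -
    define z where "z i = (if i mod n = d then 0 else x0 i)" for i
    have z_sph: "z \<in> sphere_linf k"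
      unfolding sphere_linf_def in_Rk_def
    proof (intro CollectI conjI allI impI)
      show "z i = 0" if "k \<le> i" for i using x0_zero_big that by (simp add: z_def)
      show "linf_norm k z = 1"
      proof (rule linf_eq1[of k z 0])
        show "\<bar>z i\<bar> \<le> 1" for i using val_le1 val_pos by (simp add: z_def x0_def less_imp_le)
        show "0 < k" by (rule k0)
        show "\<bar>z 0\<bar> = 1" using val_0 npos d1 by (simp add: z_def x0_def)
      qed
    qed
    have close: "linf_norm k (z - x0) \<le> 1 / real d"
    proof (rule linf_le)
      show "0 \<le> 1 / real d" by simp
      fix i :: nat
      show "\<bar>(z - x0) i\<bar> \<le> 1 / real d"
        using val_d val_pos by (simp add: z_def x0_def less_imp_le)
    qed
    define R where "R = (\<lambda>m. d + m * n) ` {..<(4::nat) ^ d}"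
    have dn: "d < n" by (simp add: n_def)
    have injR: "inj_on (\<lambda>m. d + m * n) {..<(4::nat) ^ d}"
      by (rule inj_onI) (use npos in simp)
    have RK: "R \<subseteq> {..<k}" using enc_lt[of d] by (auto simp: R_def)
    have "(\<Sum>i\<in>R. \<nu> x0 i - \<nu> z i) \<le> M / 2"
      using half_bound[OF sum1 _ z_sph x0_sph RK] nb x0_sph z_sph close by blast
    moreover have "(\<Sum>i\<in>R. \<nu> x0 i - \<nu> z i) = (\<Sum>m<(4::nat) ^ d. \<nu> x0 (d + m * n) - \<nu> z (d + m * n))"
      unfolding R_def by (subst sum.reindex[OF injR]) simp
    moreover have "\<dots> = (\<Sum>m<(4::nat) ^ d. p d)"
    proof (intro sum.cong refl)
      fix m assume "m \<in> {..<(4::nat) ^ d}"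
      then have m: "m < 4 ^ d" by simp
      have "z (d + m * n) = 0" using dm[OF dn] by (simp add: z_def)
      then have "\<nu> z (d + m * n) = 0" using zero z_sph by simp
      then show "\<nu> x0 (d + m * n) - \<nu> z (d + m * n) = p d" using pc[OF order.refl m] by simp
    qed
    ultimately show ?thesis by simp
  qed
  define a where "a j = (4::real) ^ j * p j" for j
  have a0: "0 \<le> a 0" using pnn by (simp add: a_def)
  have tot': "(\<Sum>j<d. a j) + a d = 1" using total by (simp add: a_def lessThan_Suc_atMost[symmetric])
  have shift: "(\<Sum>j<d. a (Suc j)) \<le> 1"
  proof -
    have "a 0 + (\<Sum>j<d. a (Suc j)) = (\<Sum>j<Suc d. a j)" by (rule sum.lessThan_Suc_shift[symmetric])
    also have "\<dots> = 1" using tot' by simp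
    finally show ?thesis using a0 by simp
  qed
  have "(\<Sum>j<d. 4 ^ j * (p j - p (Suc j))) = (\<Sum>j<d. a j) - (\<Sum>j<d. a (Suc j)) / 4"
    by (simp add: a_def sum_subtractf sum_divide_distrib algebra_simps)
  then have "(\<Sum>j<d. a j) \<le> M + 1 / 4" using sw shift by simp
  moreover have "a d \<le> M / 2" using bot by (simp add: a_def)
  ultimately show ?thesis using tot' by simp
qed


lemma pow_bound:
  assumes "1 \<le> d"
  shows "Suc d * 4 ^ d \<le> (19::nat) ^ (2 * d - 1) + 1"
proof -
  have "Suc d \<le> 2 ^ d" using less_exp[of d] by (simp add: Suc_le_eq)
  then have "Suc d * 4 ^ d \<le> 2 ^ d * 4 ^ d" by (rule mult_right_mono) simp
  also have "\<dots> = (8::nat) ^ d" by (simp add: power_mult_distrib[symmetric])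
  also have "\<dots> \<le> 19 ^ d" by (rule power_mono) auto
  also have "\<dots> \<le> 19 ^ (2 * d - 1)" using assms by (intro power_increasing) auto
  finally show ?thesis by simp
qed

theorem theorem4p4:
  fixes d :: nat
  assumes "d \<ge> 1"
  shows "(\<forall>k::nat. \<forall>F. k \<ge> 19 ^ (2 * d - 1) + 1 \<longrightarrow> support_preserving_map k F
            \<longrightarrow> modulus k F (1 / real d) \<ge> 1 / 2)
         \<and> \<not> (\<exists>F :: nat \<Rightarrow> (nat \<Rightarrow> real) \<Rightarrow> (nat \<Rightarrow> real).
               (\<forall>k\<ge>1. support_preserving_map k (F k)) \<and>
               (\<forall>\<epsilon>>0. \<exists>\<delta>>0. \<forall>k\<ge>1. modulus k (F k) \<delta> < \<epsilon>))"
proof -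
  have mainL: "1 / 2 \<le> M"
    if d1: "1 \<le> e" and kd: "Suc e * 4 ^ e \<le> k" and sp: "support_preserving_map k F"
      and nb: "\<And>x y. x \<in> sphere_linf k \<Longrightarrow> y \<in> sphere_linf k \<Longrightarrow> linf_norm k (x - y) \<le> 1 / real e \<Longrightarrow> l1_norm k (F x - F y) \<le> M"
    for e k F M
  proof -
    obtain \<nu> :: "(nat \<Rightarrow> real) \<Rightarrow> nat \<Rightarrow> real" where
      "(\<forall>x\<in>sphere_linf k. \<forall>i. 0 \<le> \<nu> x i) \<and>
       (\<forall>x\<in>sphere_linf k. (\<Sum>i<k. \<nu> x i) = 1) \<and>
       (\<forall>x\<in>sphere_linf k. \<forall>i. x i = 0 \<longrightarrow> \<nu> x i = 0) \<and>
       (\<forall>x\<in>sphere_linf k. \<forall>y\<in>sphere_linf k. linf_norm k (x - y) \<le> 1 / real e \<longrightarrow> (\<Sum>i<k. \<bar>\<nu> x i - \<nu> y i\<bar>) \<le> M) \<and>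
       (\<forall>x\<in>sphere_linf k. \<forall>\<sigma>. \<sigma> permutes {..<k} \<longrightarrow> (\<forall>i. \<nu> (x \<circ> \<sigma>) i = \<nu> x (\<sigma> i)))"
      using symmetrize[OF sp nb] by blast
    then show ?thesis using main_comb[OF d1 kd, of \<nu> M] by blast
  qed
  have part1: "\<forall>k::nat. \<forall>F. k \<ge> 19 ^ (2 * d - 1) + 1 \<longrightarrow> support_preserving_map k F
            \<longrightarrow> modulus k F (1 / real d) \<ge> 1 / 2"
  proof (intro allI impI)
    fix k :: nat and F assume k: "k \<ge> 19 ^ (2 * d - 1) + 1" and sp: "support_preserving_map k F"
    have kd: "Suc d * 4 ^ d \<le> k" using pow_bound[OF assms] k by linarith
    show "modulus k F (1 / real d) \<ge> 1 / 2"
      by (rule mainL[OF assms kd sp]) (rule mod_upper[OF sp])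
  qed
  have part2: "\<not> (\<exists>F :: nat \<Rightarrow> (nat \<Rightarrow> real) \<Rightarrow> (nat \<Rightarrow> real).
               (\<forall>k\<ge>1. support_preserving_map k (F k)) \<and>
               (\<forall>\<epsilon>>0. \<exists>\<delta>>0. \<forall>k\<ge>1. modulus k (F k) \<delta> < \<epsilon>))"
  proof
    assume "\<exists>F :: nat \<Rightarrow> (nat \<Rightarrow> real) \<Rightarrow> (nat \<Rightarrow> real).
               (\<forall>k\<ge>1. support_preserving_map k (F k)) \<and>
               (\<forall>\<epsilon>>0. \<exists>\<delta>>0. \<forall>k\<ge>1. modulus k (F k) \<delta> < \<epsilon>)"
    then obtain F :: "nat \<Rightarrow> (nat \<Rightarrow> real) \<Rightarrow> (nat \<Rightarrow> real)" where
      sp: "\<forall>k\<ge>1. support_preserving_map k (F k)" and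
      uc: "\<forall>\<epsilon>>0. \<exists>\<delta>>0. \<forall>k\<ge>1. modulus k (F k) \<delta> < \<epsilon>" by blast
    obtain \<delta> :: real where \<delta>: "\<delta> > 0" "\<forall>k\<ge>1. modulus k (F k) \<delta> < 1 / 2"
      using uc by (meson divide_pos_pos zero_less_one zero_less_numeral)
    define e where "e = nat \<lceil>1 / \<delta>\<rceil>"
    have ge: "1 / \<delta> \<le> real e" unfolding e_def by linarith
    have "0 < \<lceil>1 / \<delta>\<rceil>" using \<delta>(1) by simp
    then have e1: "1 \<le> e" unfolding e_def by (simp add: Suc_le_eq)
    have e\<delta>: "1 / real e \<le> \<delta>"
      using ge \<delta>(1) e1 by (simp add: field_simps)
    define k where "k = Suc e * 4 ^ e"
    have k1: "1 \<le> k" unfolding k_def by (simp add: Suc_le_eq)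
    have spk: "support_preserving_map k (F k)" using sp k1 by blast
    have "1 / 2 \<le> modulus k (F k) \<delta>"
    proof (rule mainL[OF e1 _ spk])
      show "Suc e * 4 ^ e \<le> k" by (simp add: k_def)
      fix x y assume x: "x \<in> sphere_linf k" and y: "y \<in> sphere_linf k"
        and xy: "linf_norm k (x - y) \<le> 1 / real e"
      show "l1_norm k (F k x - F k y) \<le> modulus k (F k) \<delta>"
        using xy e\<delta> by (intro mod_upper[OF spk x y]) linarith
    qed
    with \<delta>(2) k1 show False by fastforce
  qed
  show ?thesis using part1 part2 by blast
qed

end
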